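(* Let $p \in [0,1]$ and let $S(n,j) = \Pr[I_{n,p} \le j] = \sum_{i=0}^{j}\binom{n}{i}p^i(1-p)^{n-i}$, where $I_{n,p}$ is a binomial random variable with $n$ trials and success probability $p$. Fix an integer $k \ge 0$. Then for every $n \ge k$, $S(n+1, n+1-k) \ge S(n, n-k)$; that is, $S(n,n-k)$ is monotonically non-decreasing in $n$.
   Context: $S(n,j)$ is called the (upper) truncated binomial distribution. *)

theory Defs
  imports Complex_Main
begin

definition S :: "real \<Rightarrow> nat \<Rightarrow> nat \<Rightarrow> real" where
  "S p n j = (\<Sum>i=0..j. real (n choose i) * p ^ i * (1 - p) ^ (n - i))"

end

theory Submission
  imports Defs
begin

lemma S_Suc: "S p n (Suc j) = S p n j + real (n choose Suc j) * p ^ Suc j * (1 - p) ^ (n - Suc j)"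
  unfolding S_def by simp

lemma S_rec: "S p (n+1) (j+1) = (1 - p) * S p n (j+1) + p * S p n j"
proof (induction j)
  case 0
  show ?case
  proof (cases n)
    case 0 then show ?thesis by (simp add: S_def)
  next
    case (Suc m)
    then show ?thesis by (simp add: S_def algebra_simps)
  qed
next
  case (Suc j)
  have e1: "S p (n+1) (Suc j + 1) = S p (n+1) (j+1) + real ((n+1) choose (j+2)) * p ^ (j+2) * (1-p) ^ (n - Suc j)"
    using S_Suc[of p "n+1" "j+1"] by simp
  have e2: "S p n (Suc j + 1) = S p n (j+1) + real (n choose (j+2)) * p ^ (j+2) * (1-p) ^ (n - (j+2))"
    using S_Suc[of p n "j+1"] by simp
  have e3: "S p n (Suc j) = S p n j + real (n choose (j+1)) * p ^ (j+1) * (1-p) ^ (n - (j+1))"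
    using S_Suc[of p n j] by simp
  have key: "real ((n+1) choose (j+2)) * p ^ (j+2) * (1-p) ^ (n - Suc j)
      = (1-p) * (real (n choose (j+2)) * p ^ (j+2) * (1-p) ^ (n - (j+2)))
        + p * (real (n choose (j+1)) * p ^ (j+1) * (1-p) ^ (n - (j+1)))"
  proof (cases "j + 2 \<le> n")
    case True
    define m where "m = n - (j+2)"
    have m1: "n - Suc j = Suc m" and m2: "n - (j+1) = Suc m" using True by (simp_all add: m_def)
    have c: "real ((n+1) choose (j+2)) = real (n choose (j+2)) + real (n choose (j+1))"
      by simp
    show ?thesis unfolding m1 m2 c m_def[symmetric] by (simp add: algebra_simps)
  next
    case False
    then have "n choose (j+2) = 0" by simp
    moreover have "(n+1) choose (j+2) = (n choose (j+1))"
      using False by simp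
    ultimately show ?thesis by (simp add: algebra_simps)
  qed
  show ?case using Suc.IH e1 e2 e3 key by (simp add: algebra_simps)
qed

theorem mainTheorem2:
  fixes p :: real and k n :: nat
  assumes "0 \<le> p" and "p \<le> 1" and "k \<le> n"
  shows "S p (n + 1) (n + 1 - k) \<ge> S p n (n - k)"
proof -
  have eq: "n + 1 - k = (n - k) + 1" using assms(3) by simp
  have mono: "S p n (n - k) \<le> S p n ((n - k) + 1)"
    using S_Suc[of p n "n-k"] assms(1,2) by simp
  have "S p (n + 1) (n + 1 - k) = (1 - p) * S p n ((n-k)+1) + p * S p n (n-k)"
    using S_rec eq by simp
  also have "\<dots> \<ge> (1 - p) * S p n (n-k) + p * S p n (n-k)"
    using mono assms(2) by (simp add: mult_left_mono)
  finally show ?thesis by (simp add: algebra_simps)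
qed

end
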